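(* Let $I$ be an index set of non-measurable cardinality and $H$ the group $\mathbb Z^{(I)}$ with the topology of pointwise convergence on $\mathbb Z^I$. Let $\bar t\in\mathbb T^I$ be such that $\bar t(i)=\frac{p_i}{q_i}t_0$ (modulo $1$) for all $i\in I$, where $p_i,q_i$ are relatively prime integers for each $i$, and $t_0$ is either an irrational number or $1$. Then $\bar t\in\widehat H$ if and only if the family $(|q_i|)_{i\in I}$ is bounded.
   Context: $\mathbb Z^{(I)}$ is the group of finitely supported functions $I\to\mathbb Z$, paired with $\mathbb Z^I$ by $\langle\bar g,\bar x\rangle=\sum_i\bar g(i)\bar x(i)$; $H$ carries the weakest topology making all maps $\bar g\mapsto\langle\bar g,\bar x\rangle\in\mathbb Z$ ($\mathbb Z$ discrete) continuous. $\mathbb T=\mathbb R/\mathbb Z$, identified with $(-1/2,1/2]$. An element $\bar t\in\mathbb T^I$ is identified with the homomorphism $H\to\mathbb T$, $\bar g\mapsto\sum_i\bar g(i)\bar t(i)$, and $\widehat H$ (continuous homomorphisms $H\to\mathbb T$) is thereby a subgroup of $\mathbb T^I$. *)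

theory Defs
  imports "HOL-Analysis.Analysis"
begin

text \<open>Ulam non-measurability of the cardinality of the index set (type 'i):
  every countably complete ultrafilter on the index set is principal.\<close>
definition nonmeasurable_card :: "'i set \<Rightarrow> bool" where
  "nonmeasurable_card I \<longleftrightarrow>
     (\<forall>U :: 'i set set.
        (U \<subseteq> Pow I \<and> I \<in> U \<and> {} \<notin> U
         \<and> (\<forall>A B. A \<in> U \<and> A \<subseteq> B \<and> B \<subseteq> I \<longrightarrow> B \<in> U)
         \<and> (\<forall>F :: nat \<Rightarrow> 'i set. range F \<subseteq> U \<longrightarrow> \<Inter>(range F) \<in> U)
         \<and> (\<forall>A. A \<subseteq> I \<longrightarrow> A \<in> U \<or> I - A \<in> U))
        \<longrightarrow> (\<exists>i\<in>I. \<forall>A. A \<subseteq> I \<longrightarrow> (A \<in> U \<longleftrightarrow> i \<in> A)))"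

definition Zsum :: "('i \<Rightarrow> int) set" where
  "Zsum = {g. finite {i. g i \<noteq> 0}}"

definition pairing :: "('i \<Rightarrow> int) \<Rightarrow> ('i \<Rightarrow> 'a::comm_ring_1) \<Rightarrow> 'a" where
  "pairing g x = (\<Sum>i\<in>{i. g i \<noteq> 0}. of_int (g i) * x i)"

text \<open>Weakest topology on Z^(I) making all g \<mapsto> <g,x> \<in> Z (discrete) continuous:
  generated by the preimages of singletons.\<close>
definition H_top :: "('i \<Rightarrow> int) topology" where
  "H_top = topology_generated_by
     {{g \<in> Zsum. pairing g x = n} | (x :: 'i \<Rightarrow> int) n. True}"

text \<open>t \<in> T^I (represented by real representatives) lies in the dual group iff the
  homomorphism g \<mapsto> \<Sum> g(i) t(i) (mod 1) is continuous. The circle group T = R/Z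
  is identified with the unit circle via s \<mapsto> exp(2 \<pi> i s).\<close>
definition in_dual :: "('i \<Rightarrow> real) \<Rightarrow> bool" where
  "in_dual t \<longleftrightarrow>
     continuous_map H_top euclidean (\<lambda>g. cis (2 * pi * pairing g t))"

end

theory Submission
  imports Defs
begin


lemma pairing_sum:
  assumes "finite S" "{i. g i \<noteq> 0} \<subseteq> S"
  shows "pairing g x = (\<Sum>i\<in>S. of_int (g i) * x i)"
  unfolding pairing_def
  by (rule sum.mono_neutral_left) (use assms in auto)

lemma pairing_lin:
  assumes "finite S" "{i. g1 i \<noteq> 0} \<subseteq> S" "{i. g2 i \<noteq> 0} \<subseteq> S"
  shows "pairing (\<lambda>j. a * g1 j + b * g2 j) x = of_int a * pairing g1 x + of_int b * pairing g2 x"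
proof -
  have "{i. a * g1 i + b * g2 i \<noteq> 0} \<subseteq> S"
  proof
    fix i assume "i \<in> {i. a * g1 i + b * g2 i \<noteq> 0}"
    then have "g1 i \<noteq> 0 \<or> g2 i \<noteq> 0" by auto
    then show "i \<in> S" using assms by auto
  qed
  then have "pairing (\<lambda>j. a * g1 j + b * g2 j) x = (\<Sum>i\<in>S. of_int (a * g1 i + b * g2 i) * x i)"
    by (rule pairing_sum[OF assms(1)])
  also have "\<dots> = of_int a * (\<Sum>i\<in>S. of_int (g1 i) * x i) + of_int b * (\<Sum>i\<in>S. of_int (g2 i) * x i)"
    by (simp add: sum.distrib sum_distrib_left algebra_simps)
  also have "\<dots> = of_int a * pairing g1 x + of_int b * pairing g2 x"
    by (simp only: pairing_sum[OF assms(1,2)] pairing_sum[OF assms(1,3)])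
  finally show ?thesis .
qed

definition Bas :: "('i \<Rightarrow> int) set set" where
  "Bas = {{g \<in> Zsum. pairing g x = n} | (x :: 'i \<Rightarrow> int) n. True}"

lemma gen_nbhd:
  fixes g :: "'i \<Rightarrow> int"
  assumes "generate_topology_on Bas U" "g \<in> U"
  shows "\<exists>F. finite F \<and> {h\<in>Zsum. \<forall>x\<in>F. pairing h x = (pairing g x :: int)} \<subseteq> U"
  using assms
proof (induction arbitrary: g rule: generate_topology_on.induct)
  case Empty then show ?case by simp
next
  case (Int a b)
  have ga: "g \<in> a" "g \<in> b" using Int.prems by auto
  obtain F1 where F1: "finite F1" "{h\<in>Zsum. \<forall>x\<in>F1. pairing h x = (pairing g x :: int)} \<subseteq> a"
    using Int.IH(1)[OF ga(1)] by blast
  obtain F2 where F2: "finite F2" "{h\<in>Zsum. \<forall>x\<in>F2. pairing h x = (pairing g x :: int)} \<subseteq> b"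
    using Int.IH(2)[OF ga(2)] by blast
  have "{h\<in>Zsum. \<forall>x\<in>F1 \<union> F2. pairing h x = (pairing g x :: int)} \<subseteq> a \<inter> b"
    using F1(2) F2(2) by blast
  then show ?case using \<open>finite F1\<close> \<open>finite F2\<close> by (intro exI[of _ "F1 \<union> F2"]) simp
next
  case (UN K)
  then obtain k where "k \<in> K" "g \<in> k" by blast
  then obtain F where "finite F" "{h\<in>Zsum. \<forall>x\<in>F. pairing h x = (pairing g x :: int)} \<subseteq> k"
    using UN.IH[of k g] by blast
  then show ?case using \<open>k \<in> K\<close> by blast
next
  case (Basis s)
  have "s \<in> Bas" by (rule Basis.hyps)
  then obtain x :: "'i \<Rightarrow> int" and n where s: "s = {h \<in> Zsum. pairing h x = n}" unfolding Bas_def by blast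
  show ?case using Basis.prems s by (intro exI[of _ "{x}"]) auto
qed

lemma topspace_H: "topspace H_top = Zsum"
proof -
  have "Zsum \<in> Bas" unfolding Bas_def
    by (rule CollectI, rule exI[of _ "\<lambda>_. 0"], rule exI[of _ 0]) (auto simp: pairing_def)
  then show ?thesis unfolding H_top_def Bas_def[symmetric] by (auto simp: Bas_def)
qed

lemma cos_int_lemma:
  fixes s :: real
  assumes "\<And>n::nat. n \<ge> 1 \<Longrightarrow> cos (2 * pi * (real n * s)) > 0"
  shows "s \<in> \<int>"
proof (rule ccontr)
  assume ns: "s \<notin> \<int>"
  define d where "d = \<bar>s - round s\<bar>"
  have d0: "d > 0" using ns unfolding d_def
    by (metis Ints_of_int abs_le_zero_iff eq_iff_diff_eq_0 linorder_not_less)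
  have d1: "d \<le> 1/2" unfolding d_def using of_int_round_abs_le[of s] by (simp add: abs_minus_commute)
  define n where "n = nat (ceiling (1 / (4*d)))"
  have "1 / (4*d) > 0" using d0 by simp
  then have n1: "n \<ge> 1" unfolding n_def by linarith
  have "real n \<ge> 1/(4*d)" unfolding n_def by linarith
  then have nd1: "real n * d \<ge> 1/4" using d0 by (simp add: field_simps)
  have rn: "real n = of_int \<lceil>1/(4*d)\<rceil>" unfolding n_def using \<open>1 / (4*d) > 0\<close> by simp
  have "real n < 1/(4*d) + 1" unfolding rn using ceiling_correct[of "1/(4*d)"] by linarith
  then have nd2: "real n * d \<le> 3/4" using d0 d1 by (simp add: field_simps)
  have "cos (2 * pi * (real n * s)) = cos (2 * pi * (real n * d))"
  proof -
    define r where "r = round s"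
    define \<sigma> where "\<sigma> = s - of_int r"
    have sig: "s = of_int r + \<sigma>" "\<sigma> = d \<or> \<sigma> = -d"
      unfolding d_def r_def \<sigma>_def by auto
    have eq: "2 * pi * (real n * s) = 2 * pi * of_int (int n * r) + 2 * pi * (real n * \<sigma>)"
      unfolding sig(1) by (simp add: algebra_simps)
    have c: "cos (2 * pi * of_int m + y) = cos y" for m :: int and y
      by (simp add: cos_add)
    have "cos (2 * pi * (real n * s)) = cos (2 * pi * of_int (int n * r) + 2 * pi * (real n * \<sigma>))"
      by (subst eq) (rule refl)
    also have "\<dots> = cos (2 * pi * (real n * \<sigma>))" by (rule c)
    finally have "cos (2 * pi * (real n * s)) = cos (2 * pi * (real n * \<sigma>))" .
    then show ?thesis using sig(2) by (auto simp del: mult_minus_right simp add: mult.assoc[symmetric])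
  qed
  also have "\<dots> \<le> 0"
  proof -
    have "cos (2 * pi * (real n * d)) = - cos (2 * pi * (real n * d) - pi)"
      by (metis cos_periodic_pi diff_add_cancel)
    moreover have "cos (2 * pi * (real n * d) - pi) \<ge> 0"
    proof -
      have l1: "2*pi*(1/4) \<le> 2*pi*(real n*d)" by (rule mult_left_mono[OF nd1]) simp
      have l2: "2*pi*(real n*d) \<le> 2*pi*(3/4)" by (rule mult_left_mono[OF nd2]) simp
      show ?thesis by (rule cos_ge_zero) (use l1 l2 in linarith)+
    qed
    ultimately show ?thesis by linarith
  qed
  finally show False using assms[OF n1] by linarith
qed



lemma pairing_scale:
  assumes "finite {i. g i \<noteq> 0}"
  shows "pairing (\<lambda>j. n * g j) x = of_int n * pairing g x"
  using pairing_lin[of "{i. g i \<noteq> 0}" g g n 0 x] assms by simp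

lemma kernel_lemma:
  fixes F :: "('i \<Rightarrow> int) set"
  assumes "finite F"
  shows "\<exists>D A. D \<noteq> (0::int) \<and> finite A \<and> (\<forall>i. i \<notin> A \<longrightarrow> (\<exists>h. h i = D \<and>
           (\<forall>j. j \<notin> insert i A \<longrightarrow> h j = 0) \<and> (\<forall>x\<in>F. pairing h x = (0::int))))"
  using assms
proof (induction F rule: finite_induct)
  case empty
  have E: "\<forall>i. i \<notin> {} \<longrightarrow> (\<exists>h. h i = (1::int) \<and>
           (\<forall>j. j \<notin> insert i {} \<longrightarrow> h j = 0) \<and> (\<forall>x\<in>({} :: ('i \<Rightarrow> int) set). pairing h x = (0::int)))"
  proof (intro allI impI)
    fix i :: 'i
    show "\<exists>h. h i = (1::int) \<and> (\<forall>j. j \<notin> insert i {} \<longrightarrow> h j = 0) \<and> (\<forall>x\<in>({} :: ('i \<Rightarrow> int) set). pairing h x = (0::int))"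
      by (rule exI[of _ "\<lambda>j. if j = i then 1 else 0"]) auto
  qed
  show ?case by (intro exI[of _ "1::int"] exI[of _ "{}"] conjI one_neq_zero finite.emptyI E)
next
  case (insert x F)
  from insert.IH obtain D A where DA: "D \<noteq> 0" "finite A" and
    Hex: "\<forall>i. i \<notin> A \<longrightarrow> (\<exists>h. h i = D \<and>
           (\<forall>j. j \<notin> insert i A \<longrightarrow> h j = 0) \<and> (\<forall>x\<in>F. pairing h x = (0::int)))" by blast
  from Hex have "\<forall>i. \<exists>h. i \<notin> A \<longrightarrow> (h i = D \<and>
           (\<forall>j. j \<notin> insert i A \<longrightarrow> h j = 0) \<and> (\<forall>x\<in>F. pairing h x = (0::int)))" by blast
  then obtain H where HH: "\<And>i. i \<notin> A \<Longrightarrow> H i i = D \<and>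
           (\<forall>j. j \<notin> insert i A \<longrightarrow> H i j = 0) \<and> (\<forall>x\<in>F. pairing (H i) x = (0::int))"
    by metis
  define y where "y i = (pairing (H i) x :: int)" for i
  show ?case
  proof (cases "\<exists>c. c \<notin> A \<and> y c \<noteq> 0")
    case False
    have E: "\<forall>i. i \<notin> A \<longrightarrow> (\<exists>h. h i = D \<and>
           (\<forall>j. j \<notin> insert i A \<longrightarrow> h j = 0) \<and> (\<forall>z\<in>insert x F. pairing h z = (0::int)))"
    proof (intro allI impI)
      fix i assume "i \<notin> A"
      then show "\<exists>h. h i = D \<and> (\<forall>j. j \<notin> insert i A \<longrightarrow> h j = 0) \<and> (\<forall>z\<in>insert x F. pairing h z = (0::int))"
        using HH[of i] False unfolding y_def by (intro exI[of _ "H i"]) auto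
    qed
    show ?thesis by (intro exI[of _ D] exI[of _ A] conjI DA E)
  next
    case True
    then obtain c where c: "c \<notin> A" "y c \<noteq> 0" by blast
    have E: "\<forall>i. i \<notin> insert c A \<longrightarrow> (\<exists>h. h i = y c * D \<and>
           (\<forall>j. j \<notin> insert i (insert c A) \<longrightarrow> h j = 0) \<and> (\<forall>z\<in>insert x F. pairing h z = (0::int)))"
    proof (intro allI impI)
      fix i assume i: "i \<notin> insert c A"
      let ?h = "\<lambda>j. y c * H i j + (- y i) * H c j"
      have fin: "finite (insert i (insert c A))" using DA by simp
      have s1: "{j. H i j \<noteq> 0} \<subseteq> insert i (insert c A)" using HH[of i] i by auto
      have s2: "{j. H c j \<noteq> 0} \<subseteq> insert i (insert c A)" using HH[of c] c by auto
      have pl: "pairing ?h z = y c * pairing (H i) z - y i * pairing (H c) z" for z :: "'i \<Rightarrow> int"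
        using pairing_lin[OF fin s1 s2, of "y c" "- y i" z] by simp
      show "\<exists>h. h i = y c * D \<and> (\<forall>j. j \<notin> insert i (insert c A) \<longrightarrow> h j = 0) \<and>
              (\<forall>z\<in>insert x F. pairing h z = (0::int))"
      proof (intro exI[of _ ?h] conjI allI impI ballI)
        have "H c i = 0" using HH[of c] c i by auto
        then show "?h i = y c * D" using HH[of i] i by auto
      next
        fix j assume j: "j \<notin> insert i (insert c A)"
        have "H i j = 0" using s1 j by blast
        moreover have "H c j = 0" using s2 j by blast
        ultimately show "?h j = 0" by simp
      next
        fix z assume "z \<in> insert x F"
        then show "pairing ?h z = 0"
        proof
          assume "z = x" then show ?thesis using pl unfolding y_def by simp
        next
          assume "z \<in> F" then show ?thesis using pl HH[of i] HH[of c] i c by simp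
        qed
      qed
    qed
    have "y c * D \<noteq> 0" using DA c by simp
    moreover have "finite (insert c A)" using DA by simp
    ultimately show ?thesis by (intro exI[of _ "y c * D"] exI[of _ "insert c A"] conjI E)
  qed
qed

lemma rat_int:
  fixes r t0 :: real
  assumes "r \<in> \<rat>" "r * t0 \<in> \<int>" "t0 \<notin> \<rat> \<or> t0 = 1"
  shows "r \<in> \<int>"
proof (cases "t0 = 1")
  case True then show ?thesis using assms by simp
next
  case False
  then have t0: "t0 \<notin> \<rat>" using assms by auto
  show ?thesis
  proof (cases "r = 0")
    case False
    have "r * t0 \<in> \<rat>" using assms(2) Ints_subset_Rats by blast
    moreover have "(r * t0) / r = t0" using False by simp
    ultimately have "t0 \<in> \<rat>" using assms(1) Rats_divide by metis
    then show ?thesis using t0 by simp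
  qed simp
qed

lemma H_top_Bas: "H_top = topology_generated_by Bas"
  by (simp add: H_top_def Bas_def)



lemma forward:
  fixes t :: "'i \<Rightarrow> real" and p q :: "'i \<Rightarrow> int" and t0 :: real
  assumes cont: "in_dual t"
    and cop: "\<And>i. coprime (p i) (q i)"
    and q0: "\<And>i. q i \<noteq> 0"
    and tk: "\<And>i. t i - (of_int (p i) / of_int (q i)) * t0 \<in> \<int>"
    and t0c: "t0 \<notin> \<rat> \<or> t0 = 1"
  shows "bdd_above (range (\<lambda>i. \<bar>q i\<bar>))"
proof -
  define chr where "chr g = cis (2 * pi * pairing g t)" for g :: "'i \<Rightarrow> int"
  have ho: "openin euclidean {z::complex. 0 < Re z}"
    by (rule open_openin[THEN iffD1, OF open_halfspace_Re_gt])
  have "\<forall>U. openin euclidean U \<longrightarrow> openin H_top {g \<in> topspace H_top. cis (2 * pi * pairing g t) \<in> U}"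
    using cont unfolding in_dual_def continuous_map by blast
  from mp[OF spec[OF this, of "{z. 0 < Re z}"] ho]
  have "openin H_top {g \<in> topspace H_top. chr g \<in> {z. Re z > 0}}" unfolding chr_def .
  then have gen: "generate_topology_on Bas {g \<in> Zsum. 0 < Re (chr g)}"
    unfolding topspace_H by (simp add: H_top_Bas openin_topology_generated_by_iff)
  have 0: "(\<lambda>_. 0) \<in> {g \<in> Zsum. 0 < Re (chr g)}"
    by (simp add: Zsum_def chr_def pairing_def)
  obtain F where F: "finite F"
    "{h\<in>Zsum. \<forall>x\<in>F. pairing h x = (pairing (\<lambda>_. 0::int) x :: int)} \<subseteq> {g \<in> Zsum. 0 < Re (chr g)}"
    using gen_nbhd[OF gen 0] by blast
  have p0: "pairing (\<lambda>_. 0::int) x = (0::int)" for x :: "'i \<Rightarrow> int" by (simp add: pairing_def)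
  have K: "\<And>h. h \<in> Zsum \<Longrightarrow> (\<forall>x\<in>F. pairing h x = (0::int)) \<Longrightarrow> 0 < Re (chr h)"
    using F(2) p0 by auto
  obtain D A where DA: "D \<noteq> 0" "finite A" and
    Hex: "\<forall>i. i \<notin> A \<longrightarrow> (\<exists>h. h i = D \<and>
           (\<forall>j. j \<notin> insert i A \<longrightarrow> h j = 0) \<and> (\<forall>x\<in>F. pairing h x = (0::int)))"
    using kernel_lemma[OF F(1)] by blast
  define Q where "Q = (\<Prod>a\<in>A. q a)"
  have Q0: "Q \<noteq> 0" unfolding Q_def using q0 DA(2) by simp
  define k where "k j = t j - (of_int (p j) / of_int (q j)) * t0" for j
  have bound: "\<bar>q i\<bar> \<le> \<bar>Q * D\<bar>" if iA: "i \<notin> A" for i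
  proof -
    have "\<exists>h. h i = D \<and> (\<forall>j. j \<notin> insert i A \<longrightarrow> h j = 0) \<and> (\<forall>x\<in>F. pairing h x = (0::int))"
      by (rule Hex[rule_format, OF iA])
    then obtain h where hh: "h i = D \<and> (\<forall>j. j \<notin> insert i A \<longrightarrow> h j = 0) \<and> (\<forall>x\<in>F. pairing h x = (0::int))"
      by (elim exE) (erule that)
    have h: "h i = D" "\<And>j. j \<notin> insert i A \<Longrightarrow> h j = 0" "\<And>x. x\<in>F \<Longrightarrow> pairing h x = (0::int)"
      using hh by auto
    define S where "S = insert i A"
    have finS: "finite S" using DA(2) S_def by simp
    have suppS: "{j. h j \<noteq> 0} \<subseteq> S" using h(2) S_def by auto
    have finsupp: "finite {j. h j \<noteq> 0}" using finS suppS finite_subset by blast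
    have "cos (2 * pi * (real n * pairing h t)) > 0" if "n \<ge> 1" for n :: nat
    proof -
      let ?g = "\<lambda>j. int n * h j"
      have "{j. ?g j \<noteq> 0} \<subseteq> {j. h j \<noteq> 0}" by auto
      then have gZ: "?g \<in> Zsum" unfolding Zsum_def using finsupp finite_subset by blast
      have "\<forall>x\<in>F. pairing ?g x = (0::int)"
      proof
        fix x :: "'i \<Rightarrow> int" assume xF: "x \<in> F"
        have "pairing ?g x = of_int (int n) * pairing h x" by (rule pairing_scale[OF finsupp])
        then show "pairing ?g x = 0" using h(3)[OF xF] by simp
      qed
      then have "0 < Re (chr ?g)" using K gZ by blast
      moreover have "pairing ?g t = real n * pairing h t"
        using pairing_scale[OF finsupp, of "int n" t] by simp
      ultimately show ?thesis unfolding chr_def by simp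
    qed
    then have sZ: "pairing h t \<in> \<int>" by (rule cos_int_lemma)
    define r :: real where "r = (\<Sum>j\<in>S. of_int (h j) * (of_int (p j) / of_int (q j)))"
    have "pairing h t = (\<Sum>j\<in>S. of_int (h j) * t j)" by (rule pairing_sum[OF finS suppS])
    also have "\<dots> = (\<Sum>j\<in>S. of_int (h j) * (of_int (p j) / of_int (q j)) * t0 + of_int (h j) * k j)"
      by (rule sum.cong) (auto simp: k_def algebra_simps)
    also have "\<dots> = r * t0 + (\<Sum>j\<in>S. of_int (h j) * k j)"
      by (simp add: sum.distrib r_def sum_distrib_right)
    finally have "r * t0 = pairing h t - (\<Sum>j\<in>S. of_int (h j) * k j)" by simp
    moreover have "(\<Sum>j\<in>S. of_int (h j) * k j) \<in> \<int>"
      using tk unfolding k_def by (intro Ints_sum Ints_mult) auto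
    ultimately have "r * t0 \<in> \<int>" using sZ by simp
    moreover have "r \<in> \<rat>" unfolding r_def by (intro Rats_sum Rats_mult Rats_divide) auto
    ultimately have rZ: "r \<in> \<int>" using rat_int t0c by blast
    have termZ: "of_int Q * (of_int (h a) * (of_int (p a) / of_int (q a))) \<in> (\<int> :: real set)" if "a \<in> A" for a
    proof -
      have "Q = q a * (\<Prod>b\<in>A - {a}. q b)" unfolding Q_def using that DA(2) by (simp add: prod.remove)
      then have e: "of_int Q * (of_int (h a) * (of_int (p a) / of_int (q a))) =
          (of_int (h a * p a * (\<Prod>b\<in>A - {a}. q b)) :: real)" using q0[of a] by (simp add: field_simps)
      show ?thesis unfolding e by (rule Ints_of_int)
    qed
    have "of_int Q * r = of_int Q * (of_int D * (of_int (p i) / of_int (q i)))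
        + (\<Sum>a\<in>A. of_int Q * (of_int (h a) * (of_int (p a) / of_int (q a))))"
      unfolding r_def S_def using iA DA(2) h(1) by (simp add: sum_distrib_left distrib_left)
    then have "of_int Q * (of_int D * (of_int (p i) / of_int (q i))) = of_int Q * r
        - (\<Sum>a\<in>A. of_int Q * (of_int (h a) * (of_int (p a) / of_int (q a))))" by simp
    also have "\<dots> \<in> \<int>" by (rule Ints_diff[OF Ints_mult[OF Ints_of_int rZ] Ints_sum[OF termZ]])
    finally obtain m where m: "of_int Q * (of_int D * (of_int (p i) / of_int (q i))) = (of_int m :: real)"
      by (auto elim: Ints_cases)
    then have "of_int (Q * D * p i) = (of_int (m * q i) :: real)" using q0[of i] by (simp add: field_simps)
    then have "Q * D * p i = m * q i" by (simp only: of_int_eq_iff)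
    then have "q i dvd (Q * D) * p i" by (metis dvd_triv_right)
    then have "q i dvd Q * D" using cop[of i] by (simp add: coprime_dvd_mult_left_iff coprime_commute)
    then show ?thesis using Q0 DA(1) by (intro dvd_imp_le_int) auto
  qed
  define B where "B = max \<bar>Q * D\<bar> (Max ((\<lambda>a. \<bar>q a\<bar>) ` A))"
  have "\<bar>q i\<bar> \<le> B" for i
  proof (cases "i \<in> A")
    case True
    have "\<bar>q i\<bar> \<le> Max ((\<lambda>a. \<bar>q a\<bar>) ` A)" by (rule Max_ge) (use DA(2) True in auto)
    then show ?thesis unfolding B_def by linarith
  next
    case False then show ?thesis unfolding B_def using bound by force
  qed
  then show ?thesis by (intro bdd_aboveI[of _ B]) auto
qed



lemma backward:
  fixes t :: "'i \<Rightarrow> real" and p q :: "'i \<Rightarrow> int" and t0 :: real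
  assumes bdd: "bdd_above (range (\<lambda>i. \<bar>q i\<bar>))"
    and q0: "\<And>i. q i \<noteq> 0"
    and tk: "\<And>i. t i - (of_int (p i) / of_int (q i)) * t0 \<in> \<int>"
  shows "in_dual t"
proof -
  obtain N where N: "\<And>i. \<bar>q i\<bar> \<le> N" using bdd unfolding bdd_above_def by auto
  define M :: int where "M = fact (nat N)"
  have M0: "M \<noteq> 0" unfolding M_def by simp
  have qM: "q i dvd M" for i
  proof -
    have "nat \<bar>q i\<bar> dvd fact (nat N)" using q0[of i] N[of i] by (intro dvd_fact) auto
    then have "int (nat \<bar>q i\<bar>) dvd int (fact (nat N))" by (simp only: int_dvd_int_iff)
    then show ?thesis unfolding M_def by (simp add: of_nat_fact)
  qed
  define x where "x i = M div q i * p i" for i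
  have xr: "(of_int (x i) :: real) = of_int M / of_int (q i) * of_int (p i)" for i
    unfolding x_def using qM[of i] by (simp add: of_int_div)
  define k where "k j = t j - (of_int (p j) / of_int (q j)) * t0" for j
  define G where "G n = cis (2 * pi * (t0 / of_int M * of_int n))" for n :: int
  have chi: "cis (2 * pi * pairing g t) = G (pairing g x)" if g: "g \<in> Zsum" for g
  proof -
    let ?S = "{i. g i \<noteq> 0}"
    have "pairing g t = (\<Sum>j\<in>?S. of_int (g j) * t j)" by (simp add: pairing_def)
    also have "\<dots> = (\<Sum>j\<in>?S. t0 / of_int M * (of_int (g j) * of_int (x j)) + of_int (g j) * k j)"
      by (rule sum.cong) (auto simp: k_def xr M0 field_simps)
    also have "\<dots> = t0 / of_int M * of_int (pairing g x) + (\<Sum>j\<in>?S. of_int (g j) * k j)"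
      by (simp add: sum.distrib sum_distrib_left pairing_def)
    finally have e: "pairing g t = t0 / of_int M * of_int (pairing g x) + (\<Sum>j\<in>?S. of_int (g j) * k j)" .
    have "(\<Sum>j\<in>?S. of_int (g j) * k j) \<in> \<int>"
      using tk unfolding k_def by (intro Ints_sum Ints_mult) auto
    then have "cis (2 * pi * (\<Sum>j\<in>?S. of_int (g j) * k j)) = 1" by (rule cis_multiple_2pi)
    then show ?thesis unfolding e G_def by (simp add: distrib_left cis_mult[symmetric])
  qed
  show ?thesis
    unfolding in_dual_def continuous_map
  proof (intro conjI allI impI)
    fix U :: "complex set"
    have eq: "{g \<in> topspace H_top. cis (2 * pi * pairing g t) \<in> U}
        = \<Union> ((\<lambda>n. {g \<in> Zsum. pairing g x = n}) ` {n. G n \<in> U})"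
      unfolding topspace_H using chi by auto
    have "generate_topology_on Bas (\<Union> ((\<lambda>n. {g \<in> Zsum. pairing g x = n}) ` {n. G n \<in> U}))"
      by (rule generate_topology_on.UN) (auto intro!: generate_topology_on.Basis simp: Bas_def)
    then show "openin H_top {g \<in> topspace H_top. cis (2 * pi * pairing g t) \<in> U}"
      unfolding eq by (simp add: H_top_Bas openin_topology_generated_by_iff)
  qed auto
qed

theorem lemma4p14:
  fixes t :: "'i \<Rightarrow> real" and p q :: "'i \<Rightarrow> int" and t0 :: real
  assumes "nonmeasurable_card (UNIV :: 'i set)"
    and "\<And>i. coprime (p i) (q i)"
    and "\<And>i. q i \<noteq> 0"
    and "\<And>i. t i - (of_int (p i) / of_int (q i)) * t0 \<in> \<int>"
    and "t0 \<notin> \<rat> \<or> t0 = 1"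
  shows "in_dual t \<longleftrightarrow> bdd_above (range (\<lambda>i. \<bar>q i\<bar>))"
proof
  assume "in_dual t"
  then show "bdd_above (range (\<lambda>i. \<bar>q i\<bar>))" by (rule forward[OF _ assms(2-5)])
next
  assume "bdd_above (range (\<lambda>i. \<bar>q i\<bar>))"
  then show "in_dual t" by (rule backward[OF _ assms(3,4)])
qed

end
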